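(* Let $A[1..n]$, $n\ge2$, be a uniformly random permutation of $n$ distinct keys, and apply Yaroslavskiy's partitioning procedure (described in the context) to $A[1..n]$, returning $(i_p,i_q)$. Then, conditional on $(i_p,i_q)$, the three subarrays $A[1..i_p-1]$, $A[i_p+1..i_q-1]$ and $A[i_q+1..n]$ after partitioning are, in terms of relative order of their entries, independent uniformly random permutations of their respective sizes.
   Context: Yaroslavskiy's partitioning of $A[\ell_0..r_0]$: compare $A[\ell_0]>A[r_0]$; let $p$ be the smaller and $q$ the larger of these two keys. Set $\ell\gets\ell_0+1$, $g\gets r_0-1$, $k\gets\ell$. While $k\le g$: if $A[k]<p$, swap $A[k],A[\ell]$ and $\ell\gets\ell+1$; else, if $A[k]\ge q$: while ($A[g]>q$ and $k<g$) do $g\gets g-1$; then if $A[g]\ge p$ swap $A[k],A[g]$, else swap $A[k],A[g]$, swap $A[k],A[\ell]$ and $\ell\gets\ell+1$; then $g\gets g-1$. After these cases, $k\gets k+1$. After the loop: $\ell\gets\ell-1$, $g\gets g+1$, $A[\ell_0]\gets A[\ell]$, $A[\ell]\gets p$, $A[r_0]\gets A[g]$, $A[g]\gets q$; return $(\ell,g)$. After partitioning, entries of $A[\ell_0..\ell-1]$ are $<p$, entries of $A[\ell+1..g-1]$ lie strictly between $p$ and $q$, entries of $A[g+1..r_0]$ are $>q$. *)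

theory Defs
  imports "HOL-Probability.Probability" "HOL-Combinatorics.Multiset_Permutations"
begin

text \<open>Arrays are modelled as functions from (1-based) indices to keys.\<close>

definition aswap :: "(nat \<Rightarrow> 'a) \<Rightarrow> nat \<Rightarrow> nat \<Rightarrow> (nat \<Rightarrow> 'a)" where
  "aswap A i j = A(i := A j, j := A i)"

function dec_g :: "(nat \<Rightarrow> 'a::linorder) \<Rightarrow> 'a \<Rightarrow> nat \<Rightarrow> nat \<Rightarrow> nat" where
  "dec_g A q k g = (if A g > q \<and> k < g then dec_g A q k (g - 1) else g)"
  by auto
termination by (relation "Wellfounded.measure (\<lambda>(A, q, k, g). g)") auto

declare dec_g.simps[simp del]

lemma dec_g_le: "dec_g A q k g \<le> g"
  by (induction A q k g rule: dec_g.induct) (subst dec_g.simps, auto)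

function yloop :: "(nat \<Rightarrow> 'a::linorder) \<Rightarrow> 'a \<Rightarrow> 'a \<Rightarrow> nat \<Rightarrow> nat \<Rightarrow> nat
    \<Rightarrow> (nat \<Rightarrow> 'a) \<times> nat \<times> nat" where
  "yloop A p q l g k =
    (if k \<le> g then
       (if A k < p then yloop (aswap A k l) p q (l + 1) g (k + 1)
        else if A k \<ge> q then
          (let g' = dec_g A q k g in
           if A g' \<ge> p then yloop (aswap A k g') p q l (g' - 1) (k + 1)
           else yloop (aswap (aswap A k g') k l) p q (l + 1) (g' - 1) (k + 1))
        else yloop A p q l g (k + 1))
     else (A, l, g))"
  by pat_completeness auto
termination
proof (relation "Wellfounded.measure (\<lambda>(A, p, q, l, g, k). Suc g - k)", goal_cases)
  case (3 A p q l g k x)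
  then show ?case using dec_g_le[of A q k g] by auto
next
  case (4 A p q l g k x)
  then show ?case using dec_g_le[of A q k g] by auto
qed auto

declare yloop.simps[simp del]

definition ypartition :: "(nat \<Rightarrow> 'a::linorder) \<Rightarrow> nat \<Rightarrow> nat \<Rightarrow> (nat \<Rightarrow> 'a) \<times> nat \<times> nat" where
  "ypartition A l0 r0 =
    (let p = (if A l0 > A r0 then A r0 else A l0);
         q = (if A l0 > A r0 then A l0 else A r0);
         (B, l, g) = yloop A p q (l0 + 1) (r0 - 1) (l0 + 1);
         l = l - 1; g = g + 1;
         B1 = B(l0 := B l);
         B2 = B1(l := p);
         B3 = B2(r0 := B2 g);
         B4 = B3(g := q)
     in (B4, l, g))"

definition ypart_list :: "'a::linorder list \<Rightarrow> 'a list \<times> nat \<times> nat" where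
  "ypart_list xs =
    (let n = length xs; (B, ip, iq) = ypartition (\<lambda>i. xs ! (i - 1)) 1 n
     in (map B [1..<n + 1], ip, iq))"

definition rel_order :: "'a::linorder list \<Rightarrow> nat list" where
  "rel_order xs = map (\<lambda>x. card {y \<in> set xs. y < x}) xs"

text \<open>The three subarrays A[1..ip-1], A[ip+1..iq-1], A[iq+1..n] (1-based) as lists.\<close>
definition subarrays :: "'a list \<Rightarrow> nat \<Rightarrow> nat \<Rightarrow> 'a list \<times> 'a list \<times> 'a list" where
  "subarrays ys ip iq = (take (ip - 1) ys, drop ip (take (iq - 1) ys), drop iq ys)"

end

theory Submission
  imports Defs
begin


lemma dec_g_props:
  "k \<le> g \<Longrightarrow> k \<le> dec_g A q k g \<and> dec_g A q k g \<le> g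
    \<and> (\<forall>i. dec_g A q k g < i \<and> i \<le> g \<longrightarrow> q < A i)
    \<and> (dec_g A q k g = k \<or> \<not> q < A (dec_g A q k g))"
proof (induction A q k g rule: dec_g.induct)
  case (1 A q k g)
  show ?case
  proof (cases "A g > q \<and> k < g")
    case True
    then have e: "dec_g A q k g = dec_g A q k (g - 1)" apply (subst dec_g.simps) using True by simp
    have "k \<le> g - 1" using True by auto
    with 1 True have IH: "k \<le> dec_g A q k (g - 1) \<and> dec_g A q k (g - 1) \<le> g - 1
      \<and> (\<forall>i. dec_g A q k (g - 1) < i \<and> i \<le> g - 1 \<longrightarrow> q < A i)
      \<and> (dec_g A q k (g - 1) = k \<or> \<not> q < A (dec_g A q k (g - 1)))" by blast
    show ?thesis unfolding e using IH True
    proof (intro conjI allI impI)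
      fix i assume "dec_g A q k (g - 1) < i \<and> i \<le> g"
      then show "q < A i" using IH True by (cases "i = g") auto
    qed (use IH True in auto)
  next
    case False
    then have e: "dec_g A q k g = g" apply (subst dec_g.simps) using False by auto
    show ?thesis unfolding e using False 1(2) by auto
  qed
qed

lemma dec_g_sim:
  "(\<And>i. k \<le> i \<Longrightarrow> i \<le> g \<Longrightarrow> (q < A' i \<longleftrightarrow> q < A i)) \<Longrightarrow> dec_g A' q k g = dec_g A q k g"
proof (induction A q k g rule: dec_g.induct)
  case (1 A q k g)
  show ?case
  proof (cases "k < g")
    case True
    have c: "(q < A' g) = (q < A g)" using 1(2)[of g] True by auto
    have IH: "dec_g A' q k (g - 1) = dec_g A q k (g - 1)" if "A g > q"
      using 1(1)[OF conjI[OF that True]] 1(2) by auto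
    show ?thesis
      apply (subst (1 2) dec_g.simps) using c True IH by auto
  next
    case False
    then show ?thesis by (subst (1 2) dec_g.simps) simp
  qed
qed


lemma aswap_eq: "aswap A i j = A \<circ> Transposition.transpose i j"
  by (auto simp: aswap_def Transposition.transpose_def fun_eq_iff)

lemma yl1: "k \<le> g \<Longrightarrow> A k < p \<Longrightarrow> yloop A p q l g k = yloop (aswap A k l) p q (l+1) g (k+1)"
  apply (subst yloop.simps) by auto
lemma yl2: "k \<le> g \<Longrightarrow> \<not> A k < p \<Longrightarrow> q \<le> A k \<Longrightarrow> p \<le> A (dec_g A q k g) \<Longrightarrow>
  yloop A p q l g k = yloop (aswap A k (dec_g A q k g)) p q l (dec_g A q k g - 1) (k+1)"
  apply (subst yloop.simps) by (auto simp: Let_def)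
lemma yl3: "k \<le> g \<Longrightarrow> \<not> A k < p \<Longrightarrow> q \<le> A k \<Longrightarrow> \<not> p \<le> A (dec_g A q k g) \<Longrightarrow>
  yloop A p q l g k = yloop (aswap (aswap A k (dec_g A q k g)) k l) p q (l+1) (dec_g A q k g - 1) (k+1)"
  apply (subst yloop.simps) by (auto simp: Let_def)
lemma yl4: "k \<le> g \<Longrightarrow> \<not> A k < p \<Longrightarrow> \<not> q \<le> A k \<Longrightarrow> yloop A p q l g k = yloop A p q l g (k+1)"
  apply (subst yloop.simps) by auto
lemma yl5: "\<not> k \<le> g \<Longrightarrow> yloop A p q l g k = (A, l, g)"
  apply (subst yloop.simps) by auto

lemma yloop_perm:
  "lo \<le> l \<Longrightarrow> l \<le> k \<Longrightarrow> g \<le> hi \<Longrightarrow> \<exists>\<pi>. \<pi> permutes {lo..hi} \<and> fst (yloop A p q l g k) = A \<circ> \<pi>"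
proof (induction A p q l g k rule: yloop.induct)
  case (1 A p q l g k)
  show ?case
  proof (cases "k \<le> g")
    case False
    then show ?thesis by (metis yl5 fst_conv comp_id permutes_id)
  next
    case kg: True
    show ?thesis
    proof (cases "A k < p")
      case True
      have ex: "\<exists>\<pi>. \<pi> permutes {lo..hi} \<and> fst (yloop (aswap A k l) p q (l+1) g (k+1)) = aswap A k l \<circ> \<pi>"
            by (rule 1(1)[OF kg True]) (use 1(5-7) in auto)
          then obtain \<pi> where \<pi>: "\<pi> permutes {lo..hi}" "fst (yloop (aswap A k l) p q (l+1) g (k+1)) = aswap A k l \<circ> \<pi>" by blast
      have "Transposition.transpose k l \<circ> \<pi> permutes {lo..hi}"
        by (rule permutes_compose[OF \<pi>(1) permutes_swap_id]) (use 1(5-7) kg in auto)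
      then show ?thesis using \<pi> yl1[of k g A p, OF kg True] by (auto simp: aswap_eq comp_assoc intro!: exI)
    next
      case nlt: False
      show ?thesis
      proof (cases "q \<le> A k")
        case ge: True
        define x where "x = dec_g A q k g"
        have xp: "k \<le> x" "x \<le> g" using dec_g_props[OF kg, of A q] unfolding x_def by auto
        show ?thesis
        proof (cases "p \<le> A x")
          case True
          have ex: "\<exists>\<pi>. \<pi> permutes {lo..hi} \<and> fst (yloop (aswap A k x) p q l (x - 1) (k+1)) = aswap A k x \<circ> \<pi>"
            by (rule 1(2)[OF kg nlt ge x_def True]) (use 1(5-7) xp in auto)
          then obtain \<pi> where \<pi>: "\<pi> permutes {lo..hi}" "fst (yloop (aswap A k x) p q l (x - 1) (k+1)) = aswap A k x \<circ> \<pi>" by blast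
          have "Transposition.transpose k x \<circ> \<pi> permutes {lo..hi}"
            by (rule permutes_compose[OF \<pi>(1) permutes_swap_id]) (use 1(5-7) kg xp in auto)
          then show ?thesis using \<pi> yl2[of k g A p q, OF kg nlt ge] True unfolding x_def by (auto simp: aswap_eq comp_assoc intro!: exI)
        next
          case False
          have ex: "\<exists>\<pi>. \<pi> permutes {lo..hi} \<and> fst (yloop (aswap (aswap A k x) k l) p q (l+1) (x - 1) (k+1)) = aswap (aswap A k x) k l \<circ> \<pi>"
            by (rule 1(3)[OF kg nlt ge x_def False]) (use 1(5-7) xp in auto)
          then obtain \<pi> where \<pi>: "\<pi> permutes {lo..hi}" "fst (yloop (aswap (aswap A k x) k l) p q (l+1) (x - 1) (k+1)) = aswap (aswap A k x) k l \<circ> \<pi>" by blast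
          have "Transposition.transpose k x \<circ> (Transposition.transpose k l \<circ> \<pi>) permutes {lo..hi}"
            by (intro permutes_compose[OF _ permutes_swap_id] permutes_compose[OF \<pi>(1) permutes_swap_id]) (use 1(5-7) kg xp in auto)
          then show ?thesis using \<pi> yl3[of k g A p q, OF kg nlt ge] False unfolding x_def by (auto simp: aswap_eq comp_assoc intro!: exI)
        qed
      next
        case False
        show ?thesis using 1(4)[OF kg nlt False] 1(5-7) yl4[of k g A p q, OF kg nlt False] by auto
      qed
    qed
  qed
qed

definition yinv :: "nat \<Rightarrow> nat \<Rightarrow> 'a::linorder \<Rightarrow> 'a \<Rightarrow> (nat \<Rightarrow> 'a) \<Rightarrow> nat \<Rightarrow> nat \<Rightarrow> nat \<Rightarrow> bool" where
  "yinv lo hi p q A l g k \<longleftrightarrow> lo \<le> l \<and> l \<le> k \<and> l \<le> g + 1 \<and> g \<le> hi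
    \<and> (\<forall>i. lo \<le> i \<and> i < l \<longrightarrow> A i < p)
    \<and> (\<forall>i. l \<le> i \<and> i < k \<and> i \<le> g \<longrightarrow> p \<le> A i \<and> A i \<le> q)
    \<and> (\<forall>i. g < i \<and> i \<le> hi \<longrightarrow> q \<le> A i)"

lemma yinv1:
  assumes "yinv lo hi p q A l g k" "k \<le> g" "A k < p"
  shows "yinv lo hi p q (aswap A k l) (l+1) g (k+1)"
  using assms unfolding yinv_def aswap_def
  apply (intro conjI allI impI)
  apply (auto simp: less_Suc_eq not_less not_le)
  done

lemma yinv2:
  assumes "yinv lo hi p q A l g k" "k \<le> g" "q \<le> A k" "x = dec_g A q k g" "p \<le> A x" "1 \<le> lo"
  shows "yinv lo hi p q (aswap A k x) l (x - 1) (k+1)"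
proof -
  have xp: "k \<le> x" "x \<le> g" "\<And>i. x < i \<Longrightarrow> i \<le> g \<Longrightarrow> q < A i" "x = k \<or> \<not> q < A x"
    using dec_g_props[OF assms(2), of A q] assms(4) by auto
  have big: "\<And>i. x < i \<Longrightarrow> i \<le> hi \<Longrightarrow> q \<le> A i"
    using xp(3) assms(1) unfolding yinv_def by (metis less_imp_le not_le)
  have x1: "\<And>i. (x - 1 < i) = (x \<le> i)" using xp(1) assms(1,6) unfolding yinv_def by auto
  show ?thesis
    using assms xp big x1 unfolding yinv_def aswap_def
    apply (intro conjI allI impI)
    apply (auto simp: less_Suc_eq not_less not_le)
    done
qed

lemma yinv3:
  assumes "yinv lo hi p q A l g k" "k \<le> g" "q \<le> A k" "x = dec_g A q k g" "\<not> p \<le> A x" "1 \<le> lo" "p \<le> q"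
  shows "yinv lo hi p q (aswap (aswap A k x) k l) (l+1) (x - 1) (k+1)"
proof -
  have xp: "k \<le> x" "x \<le> g" "\<And>i. x < i \<Longrightarrow> i \<le> g \<Longrightarrow> q < A i" "x = k \<or> \<not> q < A x"
    using dec_g_props[OF assms(2), of A q] assms(4) by auto
  have big: "\<And>i. x < i \<Longrightarrow> i \<le> hi \<Longrightarrow> q \<le> A i"
    using xp(3) assms(1) unfolding yinv_def by (metis less_imp_le not_le)
  have x1: "\<And>i. (x - 1 < i) = (x \<le> i)" using xp(1) assms(1,6) unfolding yinv_def by auto
  have xk: "k < x" using xp(1) assms(3,5,7) by (cases "x = k") auto
  show ?thesis
    using assms xp xk big x1 unfolding yinv_def aswap_def
    apply (intro conjI allI impI)
    apply (auto simp: less_Suc_eq not_less not_le)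
    done
qed

lemma yinv4:
  assumes "yinv lo hi p q A l g k" "k \<le> g" "\<not> A k < p" "\<not> q \<le> A k"
  shows "yinv lo hi p q A l g (k+1)"
  using assms unfolding yinv_def
  apply (intro conjI allI impI)
  apply (auto simp: less_Suc_eq not_less not_le)
  done

lemma yinv5: "yinv lo hi p q A l g k \<Longrightarrow> \<not> k \<le> g \<Longrightarrow> yinv lo hi p q A l g (g + 1)"
  unfolding yinv_def by auto

lemma yloop_correct:
  "yinv lo hi p q A l g k \<Longrightarrow> p \<le> q \<Longrightarrow> 1 \<le> lo \<Longrightarrow>
   yinv lo hi p q (fst (yloop A p q l g k)) (fst (snd (yloop A p q l g k)))
     (snd (snd (yloop A p q l g k))) (snd (snd (yloop A p q l g k)) + 1)"
proof (induction A p q l g k rule: yloop.induct)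
  case (1 A p q l g k)
  show ?case
  proof (cases "k \<le> g")
    case False
    then show ?thesis using yinv5[OF 1(5) False] by (simp add: yl5)
  next
    case kg: True
    show ?thesis
    proof (cases "A k < p")
      case True
      show ?thesis using 1(1)[OF kg True yinv1[OF 1(5) kg True] 1(6,7)] yl1[of k g A p, OF kg True] by simp
    next
      case nlt: False
      show ?thesis
      proof (cases "q \<le> A k")
        case ge: True
        define x where "x = dec_g A q k g"
        show ?thesis
        proof (cases "p \<le> A x")
          case True
          show ?thesis using 1(2)[OF kg nlt ge x_def True yinv2[OF 1(5) kg ge x_def True 1(7)] 1(6,7)]
            yl2[of k g A p q, OF kg nlt ge] True unfolding x_def by simp
        next
          case False
          show ?thesis using 1(3)[OF kg nlt ge x_def False yinv3[OF 1(5) kg ge x_def False 1(7,6)] 1(6,7)]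
            yl3[of k g A p q, OF kg nlt ge] False unfolding x_def by simp
        qed
      next
        case False
        show ?thesis using 1(4)[OF kg nlt False yinv4[OF 1(5) kg nlt False] 1(6,7)] yl4[of k g A p q, OF kg nlt False] by simp
      qed
    qed
  qed
qed

lemma yloop_sim:
  "(\<And>x. (\<sigma> x < p \<longleftrightarrow> x < p) \<and> (q \<le> \<sigma> x \<longleftrightarrow> q \<le> x) \<and> (q < \<sigma> x \<longleftrightarrow> q < x) \<and> (p \<le> \<sigma> x \<longleftrightarrow> p \<le> x)) \<Longrightarrow>
   lo \<le> l \<Longrightarrow> l \<le> k \<Longrightarrow> g \<le> hi \<Longrightarrow> (\<And>i. lo \<le> i \<Longrightarrow> i \<le> hi \<Longrightarrow> A' i = \<sigma> (A i)) \<Longrightarrow>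
   snd (yloop A' p q l g k) = snd (yloop A p q l g k) \<and>
   (\<forall>i. lo \<le> i \<and> i \<le> hi \<longrightarrow> fst (yloop A' p q l g k) i = \<sigma> (fst (yloop A p q l g k) i))"
proof (induction A p q l g k arbitrary: A' rule: yloop.induct)
  case (1 A p q l g k)
  note cp = 1(5) and rng = 1(6-8) and ag = 1(9)
  show ?case
  proof (cases "k \<le> g")
    case False
    then show ?thesis using ag by (simp add: yl5)
  next
    case kg: True
    have kr: "lo \<le> k" "k \<le> hi" using rng kg by auto
    have c1: "(A' k < p) = (A k < p)" "(q \<le> A' k) = (q \<le> A k)" using cp[of "A k"] ag[OF kr] by auto
    show ?thesis
    proof (cases "A k < p")
      case True
      have e: "yloop A' p q l g k = yloop (aswap A' k l) p q (l+1) g (k+1)"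
        using yl1[of k g A' p] kg True c1 by simp
      show ?thesis unfolding e yl1[of k g A p, OF kg True]
        by (rule 1(1)[OF kg True cp]) (use rng kg ag in \<open>auto simp: aswap_def\<close>)
    next
      case nlt: False
      show ?thesis
      proof (cases "q \<le> A k")
        case ge: True
        define x where "x = dec_g A q k g"
        have dx: "dec_g A' q k g = x" unfolding x_def
          by (rule dec_g_sim) (use cp ag rng in auto)
        have xp: "k \<le> x" "x \<le> g" using dec_g_props[OF kg, of A q] unfolding x_def by auto
        have c2: "(p \<le> A' x) = (p \<le> A x)" using cp[of "A x"] ag[of x] xp rng kg by auto
        show ?thesis
        proof (cases "p \<le> A x")
          case True
          have e: "yloop A' p q l g k = yloop (aswap A' k x) p q l (x - 1) (k+1)"
            using yl2[of k g A' p q] kg nlt ge c1 c2 dx True by simp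
          show ?thesis unfolding e yl2[of k g A p q, OF kg nlt ge True[unfolded x_def]] x_def[symmetric]
            by (rule 1(2)[OF kg nlt ge x_def True cp]) (use rng kg ag xp in \<open>auto simp: aswap_def\<close>)
        next
          case False
          have e: "yloop A' p q l g k = yloop (aswap (aswap A' k x) k l) p q (l+1) (x - 1) (k+1)"
            using yl3[of k g A' p q] kg nlt ge c1 c2 dx False by simp
          show ?thesis unfolding e yl3[of k g A p q, OF kg nlt ge False[unfolded x_def]] x_def[symmetric]
            by (rule 1(3)[OF kg nlt ge x_def False cp]) (use rng kg ag xp in \<open>auto simp: aswap_def\<close>)
        qed
      next
        case False
        have e: "yloop A' p q l g k = yloop A' p q l g (k+1)"
          using yl4[of k g A' p q] kg nlt False c1 by simp
        show ?thesis unfolding e yl4[of k g A p q, OF kg nlt False]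
          by (rule 1(4)[OF kg nlt False cp]) (use rng kg ag in auto)
      qed
    qed
  qed
qed

lemma ypart_unf:
  assumes "p = (if A 1 > A n then A n else A 1)" "q = (if A 1 > A n then A 1 else A n)"
    "yloop A p q 2 (n - 1) 2 = (B, l, g)"
  shows "ypartition A 1 n = ((((B(1 := B (l-1)))((l-1) := p))(n := ((B(1 := B (l-1)))((l-1) := p)) (g+1)))((g+1) := q), l-1, g+1)"
  unfolding ypartition_def Let_def assms(1,2)[symmetric] one_add_one assms(3) prod.case by (rule refl)

lemma ypartition_correct:
  assumes n2: "2 \<le> n" and ne: "A 1 \<noteq> A n"
    and p: "p = (if A 1 > A n then A n else A 1)" and q: "q = (if A 1 > A n then A 1 else A n)"
    and yp: "ypartition A 1 n = (C, ip, iq)"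
  shows "1 \<le> ip \<and> ip < iq \<and> iq \<le> n \<and> C ip = p \<and> C iq = q
    \<and> (\<forall>j. 1 \<le> j \<and> j < ip \<longrightarrow> C j < p)
    \<and> (\<forall>j. ip < j \<and> j < iq \<longrightarrow> p \<le> C j \<and> C j \<le> q)
    \<and> (\<forall>j. iq < j \<and> j \<le> n \<longrightarrow> q \<le> C j)
    \<and> (\<exists>\<pi>. \<pi> permutes {1..n} \<and> (\<forall>j\<in>{1..n}. C j = A (\<pi> j)))"
proof -
  have pq: "p < q" using ne p q by auto
  obtain B l g where yl: "yloop A p q 2 (n-1) 2 = (B,l,g)" by (metis prod_cases3)
  have C: "C = ((((B(1 := B (l-1)))((l-1) := p))(n := ((B(1 := B (l-1)))((l-1) := p)) (g+1)))((g+1) := q))"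
    and ip: "ip = l - 1" and iq: "iq = g + 1" using ypart_unf[OF p q yl] yp by auto
  have inv0: "yinv 2 (n-1) p q A 2 (n-1) 2" using n2 unfolding yinv_def by auto
  have "yinv 2 (n-1) p q (fst (yloop A p q 2 (n-1) 2)) (fst (snd (yloop A p q 2 (n-1) 2)))
     (snd (snd (yloop A p q 2 (n-1) 2))) (snd (snd (yloop A p q 2 (n-1) 2)) + 1)"
    by (rule yloop_correct[OF inv0]) (use pq in auto)
  then have inv: "yinv 2 (n-1) p q B l g (g+1)" using yl by simp
  have "\<exists>\<pi>. \<pi> permutes {2..n-1} \<and> fst (yloop A p q 2 (n-1) 2) = A \<circ> \<pi>"
    by (rule yloop_perm) auto
  then obtain \<pi>0 where \<pi>0: "\<pi>0 permutes {2..n-1}" "B = A \<circ> \<pi>0" using yl by auto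
  have f1: "\<pi>0 1 = 1" "\<pi>0 n = n" using permutes_not_in[OF \<pi>0(1)] n2 by auto
  have Bfr: "B 1 = A 1" "B n = A n" using f1 \<pi>0(2) by auto
  have lg: "2 \<le> l" "l \<le> g + 1" "g \<le> n - 1"
    and small: "\<And>i. 2 \<le> i \<Longrightarrow> i < l \<Longrightarrow> B i < p"
    and mid: "\<And>i. l \<le> i \<Longrightarrow> i \<le> g \<Longrightarrow> p \<le> B i \<and> B i \<le> q"
    and large: "\<And>i. g < i \<Longrightarrow> i \<le> n - 1 \<Longrightarrow> q \<le> B i"
    using inv unfolding yinv_def by auto
  have r1: "1 \<le> ip" "ip < iq" "iq \<le> n" using lg n2 ip iq by auto
  have r2: "C ip = p" "C iq = q" using lg n2 unfolding C ip iq by auto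
  have r3: "\<forall>j. 1 \<le> j \<and> j < ip \<longrightarrow> C j < p"
  proof (intro allI impI)
    fix j assume j: "1 \<le> j \<and> j < ip"
    show "C j < p"
    proof (cases "j = 1")
      case True
      then show ?thesis using j lg n2 small[of "l-1"] unfolding C ip by auto
    next
      case False
      then show ?thesis using j lg n2 small[of j] unfolding C ip by auto
    qed
  qed
  have r4: "\<forall>j. ip < j \<and> j < iq \<longrightarrow> p \<le> C j \<and> C j \<le> q"
    using lg n2 mid unfolding C ip iq by auto
  have r5: "\<forall>j. iq < j \<and> j \<le> n \<longrightarrow> q \<le> C j"
  proof (intro allI impI)
    fix j assume j: "iq < j \<and> j \<le> n"
    show "q \<le> C j"
    proof (cases "j = n")
      case True
      then show ?thesis using j lg n2 large[of "g+1"] unfolding C iq by auto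
    next
      case False
      then show ?thesis using j lg n2 large[of j] unfolding C iq by auto
    qed
  qed
  define \<pi>1 where "\<pi>1 = (if A 1 > A n then \<pi>0 \<circ> Transposition.transpose 1 n else \<pi>0)"
  define Cn where "Cn j = (if j = 1 then p else if j = n then q else B j)" for j
  define \<rho> where "\<rho> = Transposition.transpose 1 (l-1) \<circ> Transposition.transpose n (g+1)"
  have \<pi>1p: "\<pi>1 permutes {1..n}"
  proof -
    have a: "\<pi>0 permutes {1..n}" by (rule permutes_subset[OF \<pi>0(1)]) auto
    show ?thesis unfolding \<pi>1_def
      using permutes_compose[OF permutes_swap_id a, of 1 n] a n2 by auto
  qed
  have \<rho>p: "\<rho> permutes {1..n}" unfolding \<rho>_def
    by (rule permutes_compose[OF permutes_swap_id permutes_swap_id]) (use lg n2 in auto)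
  have c1: "Cn j = A (\<pi>1 j)" if "j \<in> {1..n}" for j
    using that f1 \<pi>0(2) n2 unfolding Cn_def \<pi>1_def p q
    by (auto simp: Transposition.transpose_def)
  have c2: "C j = Cn (\<rho> j)" if "j \<in> {1..n}" for j
    using that lg n2 Bfr unfolding C Cn_def \<rho>_def
    by (auto simp: Transposition.transpose_def)
  have r6: "\<exists>\<pi>. \<pi> permutes {1..n} \<and> (\<forall>j\<in>{1..n}. C j = A (\<pi> j))"
  proof (intro exI conjI)
    show "\<pi>1 \<circ> \<rho> permutes {1..n}" by (rule permutes_compose[OF \<rho>p \<pi>1p])
    show "\<forall>j\<in>{1..n}. C j = A ((\<pi>1 \<circ> \<rho>) j)"
      using c1 c2 permutes_in_image[OF \<rho>p] by auto
  qed
  show ?thesis using r1 r2 r3 r4 r5 r6 by blast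
qed

lemma ypartition_sim:
  assumes n2: "2 \<le> n" and ne: "A 1 \<noteq> A n"
    and p: "p = (if A 1 > A n then A n else A 1)" and q: "q = (if A 1 > A n then A 1 else A n)"
    and cp: "\<And>x. (\<sigma> x < p \<longleftrightarrow> x < p) \<and> (q \<le> \<sigma> x \<longleftrightarrow> q \<le> x) \<and> (q < \<sigma> x \<longleftrightarrow> q < x) \<and> (p \<le> \<sigma> x \<longleftrightarrow> p \<le> x)"
    and sp: "\<sigma> p = p" and sq: "\<sigma> q = q"
    and ag: "\<And>j. 1 \<le> j \<Longrightarrow> j \<le> n \<Longrightarrow> A' j = \<sigma> (A j)"
    and yp: "ypartition A 1 n = (C, ip, iq)"
  shows "\<exists>C'. ypartition A' 1 n = (C', ip, iq) \<and> (\<forall>j\<in>{1..n}. C' j = \<sigma> (C j))"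
proof -
  have a1: "A' 1 = A 1" "A' n = A n" using ag[of 1] ag[of n] n2 sp sq p q by (auto split: if_splits)
  have p': "p = (if A' 1 > A' n then A' n else A' 1)" and q': "q = (if A' 1 > A' n then A' 1 else A' n)"
    using p q a1 by auto
  obtain B l g where yl: "yloop A p q 2 (n-1) 2 = (B,l,g)" by (metis prod_cases3)
  obtain B' l' g' where yl': "yloop A' p q 2 (n-1) 2 = (B',l',g')" by (metis prod_cases3)
  have C: "C = ((((B(1 := B (l-1)))((l-1) := p))(n := ((B(1 := B (l-1)))((l-1) := p)) (g+1)))((g+1) := q))"
    and ip: "ip = l - 1" and iq: "iq = g + 1" using ypart_unf[OF p q yl] yp by auto
  have sim: "snd (yloop A' p q 2 (n-1) 2) = snd (yloop A p q 2 (n-1) 2) \<and>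
   (\<forall>i. 2 \<le> i \<and> i \<le> n-1 \<longrightarrow> fst (yloop A' p q 2 (n-1) 2) i = \<sigma> (fst (yloop A p q 2 (n-1) 2) i))"
    by (rule yloop_sim[OF cp]) (use ag in auto)
  then have ll: "l' = l" "g' = g" and bs: "\<And>i. 2 \<le> i \<Longrightarrow> i \<le> n-1 \<Longrightarrow> B' i = \<sigma> (B i)"
    using yl yl' by auto
  have "\<exists>\<pi>. \<pi> permutes {2..n-1} \<and> fst (yloop A p q 2 (n-1) 2) = A \<circ> \<pi>"
    by (rule yloop_perm) auto
  then obtain \<pi>0 where \<pi>0: "\<pi>0 permutes {2..n-1}" "B = A \<circ> \<pi>0" using yl by auto
  have "\<exists>\<pi>. \<pi> permutes {2..n-1} \<and> fst (yloop A' p q 2 (n-1) 2) = A' \<circ> \<pi>"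
    by (rule yloop_perm) auto
  then obtain \<pi>1 where \<pi>1: "\<pi>1 permutes {2..n-1}" "B' = A' \<circ> \<pi>1" using yl' by auto
  have fr: "B 1 = A 1" "B n = A n" "B' 1 = A' 1" "B' n = A' n"
    using permutes_not_in[OF \<pi>0(1)] permutes_not_in[OF \<pi>1(1)] \<pi>0(2) \<pi>1(2) n2 by auto
  have sA: "\<sigma> (A 1) = A 1" "\<sigma> (A n) = A n" using sp sq p q by (auto split: if_splits)
  have ball: "B' j = \<sigma> (B j)" if jj: "1 \<le> j" "j \<le> n" for j
  proof -
    consider "j = 1" | "j = n" | "2 \<le> j \<and> j \<le> n - 1" using jj by (cases "j = 1"; cases "j = n"; auto)
    then show ?thesis using fr sA a1 bs by cases auto
  qed
  have C': "ypartition A' 1 n = ((((B'(1 := B' (l-1)))((l-1) := p))(n := ((B'(1 := B' (l-1)))((l-1) := p)) (g+1)))((g+1) := q), l-1, g+1)"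
    using ypart_unf[OF p' q' yl'] ll by simp
  have inv0: "yinv 2 (n-1) p q A 2 (n-1) 2" using n2 unfolding yinv_def by auto
  have "yinv 2 (n-1) p q (fst (yloop A p q 2 (n-1) 2)) (fst (snd (yloop A p q 2 (n-1) 2)))
     (snd (snd (yloop A p q 2 (n-1) 2))) (snd (snd (yloop A p q 2 (n-1) 2)) + 1)"
    by (rule yloop_correct[OF inv0]) (use ne p q in auto)
  then have lg: "2 \<le> l" "l \<le> g + 1" "g \<le> n - 1" using yl unfolding yinv_def by auto
  define C2 where "C2 = ((((B'(1 := B' (l-1)))((l-1) := p))(n := ((B'(1 := B' (l-1)))((l-1) := p)) (g+1)))((g+1) := q))"
  have "\<forall>j\<in>{1..n}. C2 j = \<sigma> (C j)"
  proof
    fix j assume j: "j \<in> {1..n}"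
    show "C2 j = \<sigma> (C j)"
      unfolding C C2_def using j lg n2 ball[of j] ball[of "l-1"] ball[of "g+1"] sp sq by auto
  qed
  moreover have "ypartition A' 1 n = (C2, ip, iq)" using C' unfolding C2_def ip iq by simp
  ultimately show ?thesis by blast
qed

lemma ypart_list_correct:
  assumes d: "distinct xs" and n: "length xs = n" "2 \<le> n" and yp: "ypart_list xs = (ys, ip, iq)"
    and p: "p = (if xs!0 > xs!(n-1) then xs!(n-1) else xs!0)"
    and q: "q = (if xs!0 > xs!(n-1) then xs!0 else xs!(n-1))"
  shows "length ys = n \<and> set ys = set xs \<and> distinct ys \<and> 1 \<le> ip \<and> ip < iq \<and> iq \<le> n
    \<and> ys!(ip-1) = p \<and> ys!(iq-1) = q \<and> (\<forall>i. i < ip-1 \<longrightarrow> ys!i < p)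
    \<and> (\<forall>i. ip \<le> i \<and> i < iq-1 \<longrightarrow> p < ys!i \<and> ys!i < q)
    \<and> (\<forall>i. iq \<le> i \<and> i < n \<longrightarrow> q < ys!i)"
proof -
  define A where "A = (\<lambda>i. xs ! (i - 1))"
  obtain C ip' iq' where yp': "ypartition A 1 n = (C, ip', iq')" by (metis prod_cases3)
  have ys: "ys = map C [1..<n+1]" and ip: "ip' = ip" and iq: "iq' = iq"
    using yp yp' n unfolding ypart_list_def A_def by (auto simp: Let_def)
  have A1: "A 1 = xs!0" "A n = xs!(n-1)" unfolding A_def by auto
  have ne: "A 1 \<noteq> A n" unfolding A1 using d n by (simp add: nth_eq_iff_index_eq)
  have p': "p = (if A 1 > A n then A n else A 1)" and q': "q = (if A 1 > A n then A 1 else A n)"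
    unfolding A1 p q by auto
  note R = ypartition_correct[OF n(2) ne p' q' yp'[unfolded ip iq]]
  then obtain \<pi> where \<pi>: "\<pi> permutes {1..n}" "\<forall>j\<in>{1..n}. C j = A (\<pi> j)" by blast
  have len: "length ys = n" unfolding ys by simp
  have ysn: "\<And>i. i < n \<Longrightarrow> ys ! i = C (i+1)" unfolding ys by (simp del: upt_Suc)
  have "set ys = C ` {1..n}" unfolding ys by auto
  also have "\<dots> = A ` (\<pi> ` {1..n})" using \<pi>(2) by (auto simp: image_iff)
  also have "\<dots> = A ` {1..n}" using permutes_image[OF \<pi>(1)] by simp
  also have "\<dots> = set xs"
  proof
    show "A ` {1..n} \<subseteq> set xs" unfolding A_def using n by auto
    show "set xs \<subseteq> A ` {1..n}"
    proof
      fix x assume "x \<in> set xs"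
      then obtain i where "i < n" "xs!i = x" using n by (auto simp: in_set_conv_nth)
      then show "x \<in> A ` {1..n}" unfolding A_def by (auto intro!: image_eqI[of _ _ "i+1"])
    qed
  qed
  finally have sety: "set ys = set xs" .
  have dy: "distinct ys" using sety len d n by (metis card_distinct distinct_card)
  have dd: "\<And>i j. i < n \<Longrightarrow> j < n \<Longrightarrow> ys!i = ys!j \<Longrightarrow> i = j" using dy len by (simp add: nth_eq_iff_index_eq)
  have b: "1 \<le> ip" "ip < iq" "iq \<le> n" and cp: "C ip = p" "C iq = q"
    and cs: "\<forall>j. 1 \<le> j \<and> j < ip \<longrightarrow> C j < p"
    and cm: "\<forall>j. ip < j \<and> j < iq \<longrightarrow> p \<le> C j \<and> C j \<le> q"
    and cl: "\<forall>j. iq < j \<and> j \<le> n \<longrightarrow> q \<le> C j" using R by auto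
  have y1: "ys!(ip-1) = p" "ys!(iq-1) = q" using ysn[of "ip-1"] ysn[of "iq-1"] b cp by auto
  have y2: "\<forall>i. i < ip-1 \<longrightarrow> ys!i < p" using ysn cs b by auto
  have y3: "\<forall>i. ip \<le> i \<and> i < iq-1 \<longrightarrow> p < ys!i \<and> ys!i < q"
  proof (intro allI impI)
    fix i assume i: "ip \<le> i \<and> i < iq-1"
    have "p \<le> ys!i \<and> ys!i \<le> q" using ysn[of i] cm i b by auto
    moreover have "ys!i \<noteq> p"
    proof
      assume "ys!i = p"
      then have "i = ip-1" using dd[of i "ip-1"] y1 i b by auto
      then show False using i b by auto
    qed
    moreover have "ys!i \<noteq> q"
    proof
      assume "ys!i = q"
      then have "i = iq-1" using dd[of i "iq-1"] y1 i b by auto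
      then show False using i b by auto
    qed
    ultimately show "p < ys!i \<and> ys!i < q" by auto
  qed
  have y4: "\<forall>i. iq \<le> i \<and> i < n \<longrightarrow> q < ys!i"
  proof (intro allI impI)
    fix i assume i: "iq \<le> i \<and> i < n"
    have "q \<le> ys!i" using ysn[of i] cl i b by auto
    moreover have "ys!i \<noteq> q"
    proof
      assume "ys!i = q"
      then have "i = iq-1" using dd[of i "iq-1"] y1 i b by auto
      then show False using i b by auto
    qed
    ultimately show "q < ys!i" by auto
  qed
  show ?thesis using len sety dy b y1 y2 y3 y4 by blast
qed

lemma set_seg: "set (drop a (take b ys)) = {ys!i | i. a \<le> i \<and> i < b \<and> i < length ys}"
proof (intro set_eqI iffI)
  fix x assume "x \<in> set (drop a (take b ys))"
  then obtain j where "j < length (drop a (take b ys))" "drop a (take b ys) ! j = x"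
    by (auto simp: in_set_conv_nth)
  moreover then have "a + j < min (length ys) b" by auto
  moreover then have "drop a (take b ys) ! j = ys ! (a + j)" by (simp add: nth_drop)
  ultimately show "x \<in> {ys!i | i. a \<le> i \<and> i < b \<and> i < length ys}"
    by (intro CollectI exI[of _ "a + j"]) auto
next
  fix x assume "x \<in> {ys!i | i. a \<le> i \<and> i < b \<and> i < length ys}"
  then obtain i where i: "a \<le> i" "i < b" "i < length ys" "x = ys!i" by auto
  then have "drop a (take b ys) ! (i - a) = x" "i - a < length (drop a (take b ys))" by auto
  then show "x \<in> set (drop a (take b ys))" by (metis nth_mem)
qed

lemma ypart_list_sets:
  assumes d: "distinct xs" and n: "length xs = n" "2 \<le> n" and yp: "ypart_list xs = (ys, ip, iq)"
    and p: "p = (if xs!0 > xs!(n-1) then xs!(n-1) else xs!0)"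
    and q: "q = (if xs!0 > xs!(n-1) then xs!0 else xs!(n-1))"
  shows "{y \<in> set xs. y < p} = set (take (ip-1) ys) \<and> {y \<in> set xs. p < y \<and> y < q} = set (drop ip (take (iq-1) ys))
    \<and> {y \<in> set xs. q < y} = set (drop iq ys) \<and> card {y \<in> set xs. y < p} = ip - 1 \<and> card {y \<in> set xs. y < q} = iq - 1
    \<and> p \<in> set xs \<and> q \<in> set xs \<and> p < q"
proof -
  note R = ypart_list_correct[OF assms]
  have len: "length ys = n" and sety: "set ys = set xs" and dy: "distinct ys"
    and b: "1 \<le> ip" "ip < iq" "iq \<le> n" and y1: "ys!(ip-1) = p" "ys!(iq-1) = q"
    and y2: "\<And>i. i < ip-1 \<Longrightarrow> ys!i < p"
    and y3: "\<And>i. ip \<le> i \<Longrightarrow> i < iq-1 \<Longrightarrow> p < ys!i \<and> ys!i < q"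
    and y4: "\<And>i. iq \<le> i \<Longrightarrow> i < n \<Longrightarrow> q < ys!i" using R by auto
  have "xs!0 \<noteq> xs!(n-1)" using d n by (simp add: nth_eq_iff_index_eq)
  then have pq: "p < q" using p q by auto
  have memK: "y \<in> set xs \<longleftrightarrow> (\<exists>i<n. ys!i = y)" for y
    unfolding sety[symmetric] using len by (auto simp: in_set_conv_nth)
  have cls: "(i < ip - 1 \<and> ys!i < p) \<or> (i = ip - 1 \<and> ys!i = p) \<or> (ip \<le> i \<and> i < iq - 1 \<and> p < ys!i \<and> ys!i < q)
      \<or> (i = iq - 1 \<and> ys!i = q) \<or> (iq \<le> i \<and> q < ys!i)" if "i < n" for i
  proof -
    consider "i < ip - 1" | "i = ip - 1" | "ip \<le> i \<and> i < iq - 1" | "i = iq - 1" | "iq \<le> i" using b by linarith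
    then show ?thesis using y1 y2 y3 y4 that by cases auto
  qed
  have tk: "\<And>b. set (take b ys) = {ys!i | i. i < b \<and> i < n}" using set_seg[of 0 _ ys] len by simp
  have dr: "set (drop iq ys) = {ys!i | i. iq \<le> i \<and> i < n}" using set_seg[of iq n ys] len by auto
  have md: "set (drop ip (take (iq-1) ys)) = {ys!i | i. ip \<le> i \<and> i < iq-1 \<and> i < n}" using set_seg[of ip "iq-1" ys] len by auto
  have s1: "{y \<in> set xs. y < p} = set (take (ip-1) ys)"
  proof (intro set_eqI iffI)
    fix y assume "y \<in> {y \<in> set xs. y < p}"
    then obtain i where i: "i<n" "ys!i = y" "y < p" using memK by auto
    then have "i < ip-1" using cls[OF i(1)] pq by auto
    then show "y \<in> set (take (ip-1) ys)" unfolding tk using i by auto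
  next
    fix y assume "y \<in> set (take (ip-1) ys)"
    then obtain i where "i < ip-1" "i < n" "y = ys!i" unfolding tk by auto
    then show "y \<in> {y \<in> set xs. y < p}" using y2 memK by auto
  qed
  have s4: "{y \<in> set xs. y < q} = set (take (iq-1) ys)"
  proof (intro set_eqI iffI)
    fix y assume "y \<in> {y \<in> set xs. y < q}"
    then obtain i where i: "i<n" "ys!i = y" "y < q" using memK by auto
    then have "i < iq-1" using cls[OF i(1)] pq b by auto
    then show "y \<in> set (take (iq-1) ys)" unfolding tk using i by auto
  next
    fix y assume "y \<in> set (take (iq-1) ys)"
    then obtain i where i: "i < iq-1" "i < n" "y = ys!i" unfolding tk by auto
    then have "ys!i < q" using cls[OF i(2)] pq by auto
    then show "y \<in> {y \<in> set xs. y < q}" using i memK by auto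
  qed
  have s2: "{y \<in> set xs. p < y \<and> y < q} = set (drop ip (take (iq-1) ys))"
  proof (intro set_eqI iffI)
    fix y assume "y \<in> {y \<in> set xs. p < y \<and> y < q}"
    then obtain i where i: "i<n" "ys!i = y" "p < y" "y < q" using memK by auto
    then have "ip \<le> i \<and> i < iq-1" using cls[OF i(1)] pq by auto
    then show "y \<in> set (drop ip (take (iq-1) ys))" unfolding md using i by auto
  next
    fix y assume "y \<in> set (drop ip (take (iq-1) ys))"
    then obtain i where "ip \<le> i" "i < iq-1" "i < n" "y = ys!i" unfolding md by auto
    then show "y \<in> {y \<in> set xs. p < y \<and> y < q}" using y3 memK by auto
  qed
  have s3: "{y \<in> set xs. q < y} = set (drop iq ys)"
  proof (intro set_eqI iffI)
    fix y assume "y \<in> {y \<in> set xs. q < y}"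
    then obtain i where i: "i<n" "ys!i = y" "q < y" using memK by auto
    then have "iq \<le> i" using cls[OF i(1)] pq by auto
    then show "y \<in> set (drop iq ys)" unfolding dr using i by auto
  next
    fix y assume "y \<in> set (drop iq ys)"
    then obtain i where "iq \<le> i" "i < n" "y = ys!i" unfolding dr by auto
    then show "y \<in> {y \<in> set xs. q < y}" using y4 memK by auto
  qed
  have c1: "card {y \<in> set xs. y < p} = ip - 1" unfolding s1
    using distinct_card[OF distinct_take[OF dy, of "ip-1"]] len b by simp
  have c2: "card {y \<in> set xs. y < q} = iq - 1" unfolding s4
    using distinct_card[OF distinct_take[OF dy, of "iq-1"]] len b by simp
  have m: "p \<in> set xs" "q \<in> set xs"
  proof -
    have "ip - 1 < n" "iq - 1 < n" using b by auto
    then show "p \<in> set xs" "q \<in> set xs" using memK[of p] memK[of q] y1 by blast+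
  qed
  show ?thesis using s1 s2 s3 c1 c2 m pq by blast
qed

lemma ypart_list_sim:
  assumes d: "distinct xs" and n: "length xs = n" "2 \<le> n" and yp: "ypart_list xs = (ys, ip, iq)"
    and p: "p = (if xs!0 > xs!(n-1) then xs!(n-1) else xs!0)"
    and q: "q = (if xs!0 > xs!(n-1) then xs!0 else xs!(n-1))"
    and cp: "\<And>x. (\<sigma> x < p \<longleftrightarrow> x < p) \<and> (q \<le> \<sigma> x \<longleftrightarrow> q \<le> x) \<and> (q < \<sigma> x \<longleftrightarrow> q < x) \<and> (p \<le> \<sigma> x \<longleftrightarrow> p \<le> x)"
    and sp: "\<sigma> p = p" and sq: "\<sigma> q = q"
  shows "ypart_list (map \<sigma> xs) = (map \<sigma> ys, ip, iq)"
proof -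
  define A where "A = (\<lambda>i. xs ! (i - 1))"
  define A' where "A' = (\<lambda>i. map \<sigma> xs ! (i - 1))"
  obtain C ip' iq' where yp': "ypartition A 1 n = (C, ip', iq')" by (metis prod_cases3)
  have ys: "ys = map C [1..<n+1]" and ip: "ip' = ip" and iq: "iq' = iq"
    using yp yp' n unfolding ypart_list_def A_def by (auto simp: Let_def)
  have A1: "A 1 = xs!0" "A n = xs!(n-1)" unfolding A_def by auto
  have ne: "A 1 \<noteq> A n" unfolding A1 using d n by (simp add: nth_eq_iff_index_eq)
  have p': "p = (if A 1 > A n then A n else A 1)" and q': "q = (if A 1 > A n then A 1 else A n)"
    unfolding A1 p q by auto
  have ag: "\<And>j. 1 \<le> j \<Longrightarrow> j \<le> n \<Longrightarrow> A' j = \<sigma> (A j)" unfolding A'_def A_def using n by auto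
  obtain C' where C': "ypartition A' 1 n = (C', ip, iq)" "\<forall>j\<in>{1..n}. C' j = \<sigma> (C j)"
    using ypartition_sim[OF n(2) ne p' q' cp sp sq ag yp'[unfolded ip iq]] by blast
  have "ypart_list (map \<sigma> xs) = (map C' [1..<n+1], ip, iq)"
    using C'(1) n unfolding ypart_list_def A'_def by (simp add: Let_def)
  also have "map C' [1..<n+1] = map \<sigma> ys" unfolding ys using C'(2) by auto
  finally show ?thesis .
qed




definition rk :: "'a::linorder set \<Rightarrow> 'a \<Rightarrow> nat" where "rk X x = card {y \<in> X. y < x}"

lemma rk_bij: assumes "finite X" shows "bij_betw (rk X) X {0..<card X}"
proof -
  have lt: "rk X x < rk X y" if "x \<in> X" "y \<in> X" "x < y" for x y
  proof -
    have "{z \<in> X. z < x} \<subset> {z \<in> X. z < y}" using that by auto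
    then show ?thesis unfolding rk_def by (intro psubset_card_mono) (use assms in auto)
  qed
  have inj: "inj_on (rk X) X"
  proof (rule inj_onI)
    fix x y assume "x \<in> X" "y \<in> X" "rk X x = rk X y"
    then show "x = y" using lt[of x y] lt[of y x] by (cases x y rule: linorder_cases) auto
  qed
  have sub: "rk X ` X \<subseteq> {0..<card X}"
  proof
    fix z assume "z \<in> rk X ` X"
    then obtain x where x: "x \<in> X" "z = rk X x" by auto
    have "{y \<in> X. y < x} \<subset> X" using x by auto
    then show "z \<in> {0..<card X}" unfolding x rk_def using assms by (auto intro: psubset_card_mono)
  qed
  have "card (rk X ` X) = card {0..<card X}" using card_image[OF inj] by simp
  then have "rk X ` X = {0..<card X}" using sub by (intro card_subset_eq) auto
  then show ?thesis using inj unfolding bij_betw_def by auto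
qed

lemma rel_order_rk: "rel_order a = map (rk (set a)) a"
  unfolding rel_order_def rk_def by simp

lemma rel_order_perm: "distinct a \<Longrightarrow> rel_order a \<in> permutations_of_set {0..<length a}"
proof -
  assume d: "distinct a"
  have b: "bij_betw (rk (set a)) (set a) {0..<card (set a)}" by (rule rk_bij) simp
  show ?thesis unfolding rel_order_rk permutations_of_set_def
    using b d bij_betw_imp_inj_on[OF b] distinct_card[OF d] by (auto simp: distinct_map bij_betw_def)
qed

definition myidx :: "'b list \<Rightarrow> 'b \<Rightarrow> nat" where "myidx xs j = (THE i. i < length xs \<and> xs ! i = j)"

lemma myidx_nth: "distinct xs \<Longrightarrow> i < length xs \<Longrightarrow> myidx xs (xs!i) = i"
  unfolding myidx_def by (rule the_equality) (auto simp: nth_eq_iff_index_eq)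

lemma myidx_in: assumes "j \<in> set xs" "distinct xs" shows "myidx xs j < length xs \<and> xs ! (myidx xs j) = j"
proof -
  obtain i where i: "i < length xs" "xs!i = j" using assms(1) by (auto simp: in_set_conv_nth)
  then show ?thesis using myidx_nth[OF assms(2) i(1)] by auto
qed

definition mv :: "'a::linorder set \<Rightarrow> nat list \<Rightarrow> nat list \<Rightarrow> 'a \<Rightarrow> 'a" where
  "mv X \<alpha> \<alpha>' x = the_inv_into X (rk X) (\<alpha>' ! myidx \<alpha> (rk X x))"

lemma mv_props:
  assumes X: "finite X" and a: "\<alpha> \<in> permutations_of_set {0..<card X}" and a': "\<alpha>' \<in> permutations_of_set {0..<card X}"
    and x: "x \<in> X"
  shows "mv X \<alpha> \<alpha>' x \<in> X \<and> rk X (mv X \<alpha> \<alpha>' x) = \<alpha>' ! myidx \<alpha> (rk X x)"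
proof -
  have b: "bij_betw (rk X) X {0..<card X}" by (rule rk_bij[OF X])
  have sa: "set \<alpha> = {0..<card X}" "distinct \<alpha>" "set \<alpha>' = {0..<card X}" "distinct \<alpha>'"
    using a a' by (auto simp: permutations_of_set_def)
  have la: "length \<alpha> = card X" "length \<alpha>' = card X" using distinct_card[OF sa(2)] distinct_card[OF sa(4)] sa(1,3) by simp_all
  have "rk X x \<in> set \<alpha>" using b x sa by (auto simp: bij_betw_def)
  then have "myidx \<alpha> (rk X x) < length \<alpha>'" using myidx_in[of "rk X x" \<alpha>] sa la by auto
  then have "\<alpha>' ! myidx \<alpha> (rk X x) \<in> set \<alpha>'" by (rule nth_mem)
  then have j: "\<alpha>' ! myidx \<alpha> (rk X x) \<in> rk X ` X" using b sa(3) by (simp add: bij_betw_def)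
  show ?thesis unfolding mv_def
    using the_inv_into_into[OF bij_betw_imp_inj_on[OF b] j] f_the_inv_into_f[OF bij_betw_imp_inj_on[OF b] j] by auto
qed

lemma mv_inj:
  assumes X: "finite X" and a: "\<alpha> \<in> permutations_of_set {0..<card X}" and a': "\<alpha>' \<in> permutations_of_set {0..<card X}"
  shows "inj_on (mv X \<alpha> \<alpha>') X \<and> mv X \<alpha> \<alpha>' ` X = X"
proof -
  have b: "bij_betw (rk X) X {0..<card X}" by (rule rk_bij[OF X])
  have sa: "set \<alpha> = {0..<card X}" "distinct \<alpha>" "set \<alpha>' = {0..<card X}" "distinct \<alpha>'"
    using a a' by (auto simp: permutations_of_set_def)
  have la: "length \<alpha> = card X" "length \<alpha>' = card X" using distinct_card[OF sa(2)] distinct_card[OF sa(4)] sa(1,3) by simp_all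
  have inj: "inj_on (mv X \<alpha> \<alpha>') X"
  proof (rule inj_onI)
    fix x y assume xy: "x \<in> X" "y \<in> X" "mv X \<alpha> \<alpha>' x = mv X \<alpha> \<alpha>' y"
    have rx: "rk X x \<in> set \<alpha>" "rk X y \<in> set \<alpha>" using b xy sa by (auto simp: bij_betw_def)
    have "rk X (mv X \<alpha> \<alpha>' x) = rk X (mv X \<alpha> \<alpha>' y)" using xy(3) by simp
    then have eq: "\<alpha>' ! myidx \<alpha> (rk X x) = \<alpha>' ! myidx \<alpha> (rk X y)"
      using mv_props[OF X a a' xy(1)] mv_props[OF X a a' xy(2)] by simp
    have m1: "myidx \<alpha> (rk X x) < length \<alpha>'" and m2: "myidx \<alpha> (rk X y) < length \<alpha>'"
      using myidx_in[OF rx(1) sa(2)] myidx_in[OF rx(2) sa(2)] la by auto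
    have e: "myidx \<alpha> (rk X x) = myidx \<alpha> (rk X y)"
      using nth_eq_iff_index_eq[OF sa(4) m1 m2] eq by simp
    have h1: "\<alpha> ! myidx \<alpha> (rk X x) = rk X x" and h2: "\<alpha> ! myidx \<alpha> (rk X y) = rk X y"
      using myidx_in[OF rx(1) sa(2)] myidx_in[OF rx(2) sa(2)] by auto
    have "rk X x = rk X y" using trans[OF sym[OF h1] trans[OF arg_cong[where f="(!) \<alpha>", OF e] h2]] .
    then show "x = y" using bij_betw_imp_inj_on[OF b] xy(1,2) unfolding inj_on_def by blast
  qed
  have sub: "mv X \<alpha> \<alpha>' ` X \<subseteq> X" using mv_props[OF X a a'] by auto
  have "mv X \<alpha> \<alpha>' ` X = X" using card_image[OF inj] sub X by (intro card_subset_eq) auto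
  then show ?thesis using inj by auto
qed

lemma rel_order_mv:
  assumes X: "finite X" and a: "\<alpha> \<in> permutations_of_set {0..<card X}" and a': "\<alpha>' \<in> permutations_of_set {0..<card X}"
    and da: "distinct as" and sa: "set as = X" and ro: "rel_order as = \<alpha>"
  shows "rel_order (map (mv X \<alpha> \<alpha>') as) = \<alpha>'"
proof -
  have s: "set \<alpha> = {0..<card X}" "distinct \<alpha>" "set \<alpha>' = {0..<card X}" "distinct \<alpha>'"
    using a a' by (auto simp: permutations_of_set_def)
  have la: "length \<alpha> = card X" "length \<alpha>' = card X" using distinct_card[OF s(2)] distinct_card[OF s(4)] s(1,3) by simp_all
  have set_m: "set (map (mv X \<alpha> \<alpha>') as) = X" using mv_inj[OF X a a'] sa by simp
  have "rel_order (map (mv X \<alpha> \<alpha>') as) = map (\<lambda>x. rk X (mv X \<alpha> \<alpha>' x)) as"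
    unfolding rel_order_rk set_m by simp
  also have "\<dots> = map (\<lambda>x. \<alpha>' ! myidx \<alpha> (rk X x)) as"
    using mv_props[OF X a a'] sa by (intro map_cong) auto
  also have "\<dots> = map (\<lambda>j. \<alpha>' ! myidx \<alpha> j) \<alpha>"
    using ro unfolding rel_order_rk sa by auto
  also have "\<dots> = \<alpha>'"
  proof (rule nth_equalityI)
    show "length (map (\<lambda>j. \<alpha>' ! myidx \<alpha> j) \<alpha>) = length \<alpha>'" using la by simp
    fix i assume "i < length (map (\<lambda>j. \<alpha>' ! myidx \<alpha> j) \<alpha>)"
    then show "map (\<lambda>j. \<alpha>' ! myidx \<alpha> j) \<alpha> ! i = \<alpha>' ! i" using myidx_nth[OF s(2)] by simp
  qed
  finally show ?thesis .
qed




lemma cond_pmf_of_set: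
  assumes "finite P" "P \<inter> S \<noteq> {}"
  shows "cond_pmf (pmf_of_set P) S = pmf_of_set (P \<inter> S)"
proof -
  have P: "P \<noteq> {}" using assms by auto
  have ne: "set_pmf (pmf_of_set P) \<inter> S \<noteq> {}" using assms P by simp
  show ?thesis
  proof (rule pmf_eqI)
    fix x
    have m: "measure (measure_pmf (pmf_of_set P)) S = real (card (P \<inter> S)) / real (card P)"
      using measure_pmf_of_set[OF P assms(1)] by simp
    have c: "card (P \<inter> S) > 0" using assms by (simp add: card_gt_0_iff)
    have cP: "card P > 0" using assms P by (simp add: card_gt_0_iff)
    show "pmf (cond_pmf (pmf_of_set P) S) x = pmf (pmf_of_set (P \<inter> S)) x"
      unfolding pmf_cond[OF ne] m using assms P c cP by (auto simp: indicator_def)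
  qed
qed

lemma uniform_from_fibers:
  assumes fS: "finite S" and fT: "finite T" and ne: "S \<noteq> {}" and img: "f ` S \<subseteq> T"
    and fib: "\<And>t t'. t \<in> T \<Longrightarrow> t' \<in> T \<Longrightarrow> card {x \<in> S. f x = t} \<le> card {x \<in> S. f x = t'}"
  shows "map_pmf f (pmf_of_set S) = pmf_of_set T"
proof -
  obtain x0 where x0: "x0 \<in> S" using ne by auto
  define c where "c = card {x \<in> S. f x = f x0}"
  have t0: "f x0 \<in> T" using img x0 by auto
  have cc: "card {x \<in> S. f x = t} = c" if "t \<in> T" for t
    unfolding c_def using fib[OF that t0] fib[OF t0 that] by simp
  have cpos: "c > 0" unfolding c_def using x0 fS by (subst card_gt_0_iff) auto
  have Sun: "S = (\<Union>t\<in>T. {x \<in> S. f x = t})" using img by auto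
  have "card S = (\<Sum>t\<in>T. card {x \<in> S. f x = t})"
    by (subst Sun, rule card_UN_disjoint) (use fT fS in auto)
  also have "\<dots> = card T * c" using cc by simp
  finally have cS: "card S = card T * c" .
  have Tne: "T \<noteq> {}" using t0 by auto
  show ?thesis
  proof (rule pmf_eqI)
    fix t
    have "pmf (map_pmf f (pmf_of_set S)) t = real (card (S \<inter> f -` {t})) / real (card S)"
      unfolding pmf_map using measure_pmf_of_set[OF ne fS] by simp
    also have "\<dots> = indicator T t / real (card T)"
    proof (cases "t \<in> T")
      case True
      have "S \<inter> f -` {t} = {x \<in> S. f x = t}" by auto
      then show ?thesis using cc[OF True] cS cpos True by (simp add: indicator_def)
    next
      case False
      then have "S \<inter> f -` {t} = {}" using img by auto
      then show ?thesis using False by (simp add: indicator_def)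
    qed
    also have "\<dots> = pmf (pmf_of_set T) t" using Tne fT by simp
    finally show "pmf (map_pmf f (pmf_of_set S)) t = pmf (pmf_of_set T) t" .
  qed
qed

theorem lemma4p1:
  fixes K :: "'a::linorder set" and n ip iq :: nat
  assumes "finite K" and "card K = n" and "n \<ge> 2"
    and "\<exists>xs \<in> permutations_of_set K. snd (ypart_list xs) = (ip, iq)"
  shows "map_pmf (\<lambda>xs. let (ys, _) = ypart_list xs; (a, b, c) = subarrays ys ip iq
                       in (rel_order a, rel_order b, rel_order c))
           (cond_pmf (pmf_of_set (permutations_of_set K))
                     {xs. snd (ypart_list xs) = (ip, iq)})
         = pmf_of_set (permutations_of_set {0..<ip - 1}
                        \<times> permutations_of_set {0..<iq - ip - 1}
                        \<times> permutations_of_set {0..<n - iq})"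
proof -
  note finK = assms(1) and cK = assms(2) and n2 = assms(3)
  define P where "P = permutations_of_set K"
  define S' where "S' = P \<inter> {xs. snd (ypart_list xs) = (ip, iq)}"
  define T where "T = permutations_of_set {0..<ip - 1} \<times> permutations_of_set {0..<iq - ip - 1} \<times> permutations_of_set {0..<n - iq}"
  define F where "F ys = (rel_order (take (ip-1) ys), rel_order (drop ip (take (iq-1) ys)), rel_order (drop iq ys))" for ys :: "'a list"
  define f where "f = (\<lambda>xs :: 'a list. let (ys, _) = ypart_list xs; (a, b, c) = subarrays ys ip iq
                       in (rel_order a, rel_order b, rel_order c))"
  have fF: "f xs = F (fst (ypart_list xs))" for xs :: "'a list"
    unfolding f_def F_def subarrays_def by (simp add: case_prod_beta)
  have finP: "finite P" unfolding P_def by simp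
  have S'ne: "S' \<noteq> {}" using assms(4) unfolding S'_def P_def by auto
  have cond: "cond_pmf (pmf_of_set P) {xs. snd (ypart_list xs) = (ip, iq)} = pmf_of_set S'"
    unfolding S'_def by (rule cond_pmf_of_set[OF finP]) (use S'ne S'_def in auto)
  have Pm: "distinct xs \<and> set xs = K \<and> length xs = n" if "xs \<in> P" for xs
    using that cK unfolding P_def permutations_of_set_def by (auto simp: distinct_card[symmetric])
  define pv where "pv xs = (if xs!0 > xs!(n-1) then xs!(n-1) else xs!0)" for xs :: "'a list"
  define qv where "qv xs = (if xs!0 > xs!(n-1) then xs!0 else xs!(n-1))" for xs :: "'a list"
  have ypS: "ypart_list xs = (fst (ypart_list xs), ip, iq)" if "xs \<in> S'" for xs
    using that unfolding S'_def by (cases "ypart_list xs") auto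
  have sets: "{y \<in> K. y < pv xs} = set (take (ip-1) (fst (ypart_list xs)))
    \<and> {y \<in> K. pv xs < y \<and> y < qv xs} = set (drop ip (take (iq-1) (fst (ypart_list xs))))
    \<and> {y \<in> K. qv xs < y} = set (drop iq (fst (ypart_list xs)))
    \<and> card {y \<in> K. y < pv xs} = ip - 1 \<and> card {y \<in> K. y < qv xs} = iq - 1
    \<and> pv xs \<in> K \<and> qv xs \<in> K \<and> pv xs < qv xs" if "xs \<in> S'" for xs
    using ypart_list_sets[of xs n "fst (ypart_list xs)" ip iq "pv xs" "qv xs"] Pm[of xs] that n2 ypS[OF that]
    unfolding pv_def qv_def S'_def by auto
  have corr: "length (fst (ypart_list xs)) = n \<and> distinct (fst (ypart_list xs)) \<and> 1 \<le> ip \<and> ip < iq \<and> iq \<le> n" if "xs \<in> S'" for xs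
    using ypart_list_correct[of xs n "fst (ypart_list xs)" ip iq "pv xs" "qv xs"] Pm[of xs] that n2 ypS[OF that]
    unfolding pv_def qv_def S'_def by auto
  obtain xs0 where xs0: "xs0 \<in> S'" using S'ne by auto
  define p0 where "p0 = pv xs0"
  define q0 where "q0 = qv xs0"
  have rkinj: "inj_on (rk K) K" using rk_bij[OF finK] by (simp add: bij_betw_def)
  have piv: "pv xs = p0 \<and> qv xs = q0" if "xs \<in> S'" for xs
  proof -
    have "rk K (pv xs) = rk K p0" "rk K (qv xs) = rk K q0"
      using sets[OF that] sets[OF xs0] unfolding rk_def p0_def q0_def by auto
    then show ?thesis using inj_onD[OF rkinj] sets[OF that] sets[OF xs0] unfolding p0_def q0_def by metis
  qed
  define Ks where "Ks = {y \<in> K. y < p0}"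
  define Km where "Km = {y \<in> K. p0 < y \<and> y < q0}"
  define Kl where "Kl = {y \<in> K. q0 < y}"
  have seg: "set (take (ip-1) (fst (ypart_list xs))) = Ks \<and> set (drop ip (take (iq-1) (fst (ypart_list xs)))) = Km
     \<and> set (drop iq (fst (ypart_list xs))) = Kl" if "xs \<in> S'" for xs
    using sets[OF that] piv[OF that] unfolding Ks_def Km_def Kl_def by auto
  have pq0: "p0 < q0" "p0 \<in> K" "q0 \<in> K" using sets[OF xs0] unfolding p0_def q0_def by auto
  have cards: "card Ks = ip - 1" "card Km = iq - ip - 1" "card Kl = n - iq"
  proof -
    let ?ys = "fst (ypart_list xs0)"
    have d: "distinct ?ys" "length ?ys = n" "1 \<le> ip" "ip < iq" "iq \<le> n" using corr[OF xs0] by auto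
    show "card Ks = ip - 1" using seg[OF xs0] distinct_card[OF distinct_take[OF d(1)], of "ip-1"] d by simp
    show "card Km = iq - ip - 1" using seg[OF xs0] distinct_card[OF distinct_drop[OF distinct_take[OF d(1)]], of ip "iq-1"] d by simp
    show "card Kl = n - iq" using seg[OF xs0] distinct_card[OF distinct_drop[OF d(1)], of iq] d by simp
  qed
  have fT: "f xs \<in> T" if "xs \<in> S'" for xs
  proof -
    let ?ys = "fst (ypart_list xs)"
    have d: "distinct ?ys" "length ?ys = n" "1 \<le> ip" "ip < iq" "iq \<le> n" using corr[OF that] by auto
    show ?thesis unfolding fF F_def T_def
      using rel_order_perm[OF distinct_take[OF d(1)], of "ip-1"]
        rel_order_perm[OF distinct_drop[OF distinct_take[OF d(1)]], of ip "iq-1"]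
        rel_order_perm[OF distinct_drop[OF d(1)], of iq] d by simp
  qed
  have fib: "card {x \<in> S'. f x = t} \<le> card {x \<in> S'. f x = t'}" if tT: "t \<in> T" "t' \<in> T" for t t'
  proof -
    obtain \<alpha> \<beta> \<gamma> where t: "t = (\<alpha>, \<beta>, \<gamma>)" by (cases t) auto
    obtain \<alpha>' \<beta>' \<gamma>' where t': "t' = (\<alpha>', \<beta>', \<gamma>')" by (cases t') auto
    have pa: "\<alpha> \<in> permutations_of_set {0..<card Ks}" "\<alpha>' \<in> permutations_of_set {0..<card Ks}"
      "\<beta> \<in> permutations_of_set {0..<card Km}" "\<beta>' \<in> permutations_of_set {0..<card Km}"
      "\<gamma> \<in> permutations_of_set {0..<card Kl}" "\<gamma>' \<in> permutations_of_set {0..<card Kl}"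
      using tT unfolding t t' T_def cards by auto
    have fin: "finite Ks" "finite Km" "finite Kl" using finK unfolding Ks_def Km_def Kl_def by auto
    define \<sigma> where "\<sigma> x = (if x \<in> Ks then mv Ks \<alpha> \<alpha>' x else if x \<in> Km then mv Km \<beta> \<beta>' x
        else if x \<in> Kl then mv Kl \<gamma> \<gamma>' x else x)" for x
    have iS: "mv Ks \<alpha> \<alpha>' x \<in> Ks" if "x \<in> Ks" for x using mv_props[OF fin(1) pa(1,2) that] by simp
    have iM: "mv Km \<beta> \<beta>' x \<in> Km" if "x \<in> Km" for x using mv_props[OF fin(2) pa(3,4) that] by simp
    have iL: "mv Kl \<gamma> \<gamma>' x \<in> Kl" if "x \<in> Kl" for x using mv_props[OF fin(3) pa(5,6) that] by simp
    have jS: "inj_on (mv Ks \<alpha> \<alpha>') Ks" using mv_inj[OF fin(1) pa(1,2)] by simp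
    have jM: "inj_on (mv Km \<beta> \<beta>') Km" using mv_inj[OF fin(2) pa(3,4)] by simp
    have jL: "inj_on (mv Kl \<gamma> \<gamma>') Kl" using mv_inj[OF fin(3) pa(5,6)] by simp
    have disj: "Ks \<inter> Km = {}" "Ks \<inter> Kl = {}" "Km \<inter> Kl = {}" using pq0 unfolding Ks_def Km_def Kl_def by auto
    have cls: "(\<sigma> x \<in> Ks \<longleftrightarrow> x \<in> Ks) \<and> (\<sigma> x \<in> Km \<longleftrightarrow> x \<in> Km) \<and> (\<sigma> x \<in> Kl \<longleftrightarrow> x \<in> Kl)" for x
      unfolding \<sigma>_def using iS iM iL disj by (auto simp: disjoint_iff)
    have cp: "(\<sigma> x < p0 \<longleftrightarrow> x < p0) \<and> (q0 \<le> \<sigma> x \<longleftrightarrow> q0 \<le> x) \<and> (q0 < \<sigma> x \<longleftrightarrow> q0 < x) \<and> (p0 \<le> \<sigma> x \<longleftrightarrow> p0 \<le> x)" for x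
    proof (cases "x \<in> Ks \<or> x \<in> Km \<or> x \<in> Kl")
      case True
      then show ?thesis using cls[of x] pq0(1) unfolding Ks_def Km_def Kl_def by auto
    next
      case False
      then show ?thesis unfolding \<sigma>_def by auto
    qed
    have sp: "\<sigma> p0 = p0" "\<sigma> q0 = q0" unfolding \<sigma>_def Ks_def Km_def Kl_def using pq0 by auto
    have inj: "inj \<sigma>"
    proof (rule injI)
      fix x y assume e: "\<sigma> x = \<sigma> y"
      consider "x \<in> Ks" | "x \<in> Km" | "x \<in> Kl" | "x \<notin> Ks \<and> x \<notin> Km \<and> x \<notin> Kl" by blast
      then show "x = y"
      proof cases
        case 1
        then have "y \<in> Ks" using cls[of x] cls[of y] e by metis
        then have "mv Ks \<alpha> \<alpha>' x = mv Ks \<alpha> \<alpha>' y" using 1 e unfolding \<sigma>_def by simp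
        then show ?thesis using inj_onD[OF jS _ 1 \<open>y \<in> Ks\<close>] by simp
      next
        case 2
        then have "y \<in> Km" using cls[of x] cls[of y] e by metis
        moreover have "x \<notin> Ks" "y \<notin> Ks" using disj 2 \<open>y \<in> Km\<close> by auto
        ultimately have "mv Km \<beta> \<beta>' x = mv Km \<beta> \<beta>' y" using 2 e unfolding \<sigma>_def by simp
        then show ?thesis using inj_onD[OF jM _ 2 \<open>y \<in> Km\<close>] by simp
      next
        case 3
        then have "y \<in> Kl" using cls[of x] cls[of y] e by metis
        moreover have "x \<notin> Ks" "y \<notin> Ks" "x \<notin> Km" "y \<notin> Km" using disj 3 \<open>y \<in> Kl\<close> by auto
        ultimately have "mv Kl \<gamma> \<gamma>' x = mv Kl \<gamma> \<gamma>' y" using 3 e unfolding \<sigma>_def by simp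
        then show ?thesis using inj_onD[OF jL _ 3 \<open>y \<in> Kl\<close>] by simp
      next
        case 4
        then have "y \<notin> Ks \<and> y \<notin> Km \<and> y \<notin> Kl" using cls[of x] cls[of y] e by metis
        then show ?thesis using 4 e unfolding \<sigma>_def by auto
      qed
    qed
    have sK: "\<sigma> ` K \<subseteq> K"
    proof
      fix y assume "y \<in> \<sigma> ` K"
      then obtain x where x: "x \<in> K" "y = \<sigma> x" by auto
      show "y \<in> K"
      proof (cases "x \<in> Ks \<or> x \<in> Km \<or> x \<in> Kl")
        case True
        then show ?thesis using cls[of x] x unfolding Ks_def Km_def Kl_def by auto
      next
        case False
        then show ?thesis using x unfolding \<sigma>_def by auto
      qed
    qed
    have sK2: "\<sigma> ` K = K"
      using card_image[OF inj_on_subset[OF inj subset_UNIV]] sK finK by (intro card_subset_eq) auto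
    have step: "map \<sigma> xs \<in> {x \<in> S'. f x = t'}" if xs: "xs \<in> {x \<in> S'. f x = t}" for xs
    proof -
      have xS: "xs \<in> S'" and ft: "f xs = t" using xs by auto
      let ?ys = "fst (ypart_list xs)"
      have pm: "distinct xs" "set xs = K" "length xs = n" using Pm[of xs] xS unfolding S'_def by auto
      have yp: "ypart_list xs = (?ys, ip, iq)" by (rule ypS[OF xS])
      have pv: "p0 = (if xs!0 > xs!(n-1) then xs!(n-1) else xs!0)" "q0 = (if xs!0 > xs!(n-1) then xs!0 else xs!(n-1))"
        using piv[OF xS] unfolding pv_def qv_def by auto
      have yp': "ypart_list (map \<sigma> xs) = (map \<sigma> ?ys, ip, iq)"
        by (rule ypart_list_sim[OF pm(1) pm(3) n2 yp pv cp sp])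
      have mP: "map \<sigma> xs \<in> P" unfolding P_def permutations_of_set_def
        using pm sK2 inj by (auto simp: distinct_map inj_on_def)
      have mS: "map \<sigma> xs \<in> S'" using mP yp' unfolding S'_def by simp
      have d: "distinct ?ys" using corr[OF xS] by auto
      have sg: "set (take (ip-1) ?ys) = Ks" "set (drop ip (take (iq-1) ?ys)) = Km" "set (drop iq ?ys) = Kl"
        using seg[OF xS] by auto
      have ro: "rel_order (take (ip-1) ?ys) = \<alpha>" "rel_order (drop ip (take (iq-1) ?ys)) = \<beta>" "rel_order (drop iq ?ys) = \<gamma>"
        using ft unfolding fF F_def t by auto
      have e1: "map \<sigma> (take (ip-1) ?ys) = map (mv Ks \<alpha> \<alpha>') (take (ip-1) ?ys)"
        using sg(1) unfolding \<sigma>_def by (intro map_cong) auto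
      have e2: "map \<sigma> (drop ip (take (iq-1) ?ys)) = map (mv Km \<beta> \<beta>') (drop ip (take (iq-1) ?ys))"
        using sg(2) disj unfolding \<sigma>_def by (intro map_cong) auto
      have e3: "map \<sigma> (drop iq ?ys) = map (mv Kl \<gamma> \<gamma>') (drop iq ?ys)"
        using sg(3) disj unfolding \<sigma>_def by (intro map_cong) auto
      have "f (map \<sigma> xs) = (rel_order (map \<sigma> (take (ip-1) ?ys)), rel_order (map \<sigma> (drop ip (take (iq-1) ?ys))),
          rel_order (map \<sigma> (drop iq ?ys)))"
        unfolding fF F_def yp' by (simp add: take_map drop_map)
      also have "\<dots> = t'" unfolding e1 e2 e3 t'
        using rel_order_mv[OF fin(1) pa(1,2) distinct_take[OF d] sg(1) ro(1)]
          rel_order_mv[OF fin(2) pa(3,4) distinct_drop[OF distinct_take[OF d]] sg(2) ro(2)]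
          rel_order_mv[OF fin(3) pa(5,6) distinct_drop[OF d] sg(3) ro(3)] by simp
      finally show ?thesis using mS by simp
    qed
    have finS': "finite S'" unfolding S'_def using finP by simp
    show ?thesis
    proof (rule card_inj_on_le)
      show "inj_on (map \<sigma>) {x \<in> S'. f x = t}" using inj_mapI[OF inj] by (simp add: inj_on_def inj_def)
      show "map \<sigma> ` {x \<in> S'. f x = t} \<subseteq> {x \<in> S'. f x = t'}" using step by auto
      show "finite {x \<in> S'. f x = t'}" using finS' by simp
    qed
  qed
  have "map_pmf f (pmf_of_set S') = pmf_of_set T"
  proof (rule uniform_from_fibers)
    show "finite S'" unfolding S'_def using finP by simp
    show "finite T" unfolding T_def by simp
    show "S' \<noteq> {}" by (rule S'ne)
    show "f ` S' \<subseteq> T" using fT by auto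
    show "\<And>t t'. t \<in> T \<Longrightarrow> t' \<in> T \<Longrightarrow> card {x \<in> S'. f x = t} \<le> card {x \<in> S'. f x = t'}" by (rule fib)
  qed
  then show ?thesis using cond unfolding f_def T_def P_def by simp
qed


end
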